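(* There exists a constant $\alpha>0$ such that the following holds for every $r=r(n)$ with $1\le r$ and $r=o(\log n)$. If $p=p(n)$ satisfies $p\,n^{\frac{2r+1}{2r}}\to\infty$ and $p\le\alpha\frac{\log n}{rn}$, then with high probability $G\in\mathcal G(n,p)$ has at least two connected components each of which is a path on exactly $2r+1$ vertices.
   Context: $\mathcal G(n,p)$ is the Erdős–Rényi random graph on vertex set $[n]$ in which each pair is an edge independently with probability $p$. "With high probability" means with probability tending to $1$ as $n\to\infty$. *)

theory Defs
  imports "HOL-Probability.Probability" "HOL-Library.Landau_Symbols"
begin

text \<open>A graph on vertex set {0..<n} is given by an edge indicator E on 2-element sets.\<close>

definition vpairs :: "nat \<Rightarrow> nat set set" where
  "vpairs n = {e. e \<subseteq> {..<n} \<and> card e = 2}"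

definition Gnp :: "nat \<Rightarrow> real \<Rightarrow> (nat set \<Rightarrow> bool) pmf" where
  "Gnp n p = Pi_pmf (vpairs n) False (\<lambda>_. bernoulli_pmf p)"

definition path_component :: "nat \<Rightarrow> (nat set \<Rightarrow> bool) \<Rightarrow> nat \<Rightarrow> nat set \<Rightarrow> bool" where
  "path_component n E k C \<longleftrightarrow> C \<subseteq> {..<n} \<and>
     (\<exists>vs. distinct vs \<and> set vs = C \<and> length vs = k \<and>
        (\<forall>u\<in>C. \<forall>w<n. u \<noteq> w \<longrightarrow>
           (E {u, w} \<longleftrightarrow> (\<exists>i. Suc i < length vs \<and> {u, w} = {vs ! i, vs ! Suc i}))))"

end

theory Submission
  imports Defs "HOL-Real_Asymp.Real_Asymp"
begin

lemma finite_vpairs: "finite (vpairs n)"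
  by (rule finite_subset[of _ "Pow {..<n}"]) (auto simp: vpairs_def)

lemma prob_fix:
  assumes "J \<subseteq> vpairs n" "0 \<le> p" "p \<le> 1"
  shows "measure_pmf.prob (Gnp n p) {E. \<forall>e\<in>J. E e = g e} = (\<Prod>e\<in>J. if g e then p else 1 - p)"
proof -
  define B where "B = (\<lambda>e. if e \<in> J then {g e} else (UNIV::bool set))"
  have "{E. \<forall>e\<in>J. E e = g e} = Pi (vpairs n) B"
    using assms(1) by (auto simp: B_def Pi_def)
  then have "measure_pmf.prob (Gnp n p) {E. \<forall>e\<in>J. E e = g e}
     = (\<Prod>e\<in>vpairs n. measure_pmf.prob (bernoulli_pmf p) (B e))"
    unfolding Gnp_def by (simp add: measure_Pi_pmf_Pi finite_vpairs)
  also have "\<dots> = (\<Prod>e\<in>vpairs n. if e \<in> J then (if g e then p else 1 - p) else 1)"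
  proof (rule prod.cong)
    fix e assume "e \<in> vpairs n"
    show "measure_pmf.prob (bernoulli_pmf p) (B e) = (if e \<in> J then (if g e then p else 1 - p) else 1)"
    proof (cases "e \<in> J")
      case True
      then show ?thesis using assms by (cases "g e") (auto simp: B_def measure_pmf_single)
    qed (simp add: B_def)
  qed simp
  also have "\<dots> = (\<Prod>e\<in>J. if g e then p else 1 - p)"
    using assms(1) by (simp add: prod.If_cases finite_vpairs Int_absorb1)
  finally show ?thesis .
qed



definition Aev :: "nat \<Rightarrow> (nat set \<Rightarrow> bool) \<Rightarrow> nat list \<Rightarrow> bool" where
  "Aev n E vs \<longleftrightarrow> (\<forall>u\<in>set vs. \<forall>w<n. u \<noteq> w \<longrightarrow>
      (E {u, w} \<longleftrightarrow> (\<exists>i. Suc i < length vs \<and> {u, w} = {vs ! i, vs ! Suc i})))"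

definition Jp :: "nat \<Rightarrow> nat list \<Rightarrow> nat set set" where
  "Jp n vs = {{u, w} | u w. u \<in> set vs \<and> w < n \<and> u \<noteq> w}"

definition PE :: "nat list \<Rightarrow> nat set set" where
  "PE vs = {{vs ! i, vs ! Suc i} | i. Suc i < length vs}"

lemma Aev_eq: "{E. Aev n E vs} = {E. \<forall>e\<in>Jp n vs. E e = (e \<in> PE vs)}"
proof -
  have "Aev n E vs \<longleftrightarrow> (\<forall>e\<in>Jp n vs. E e = (e \<in> PE vs))" for E
  proof
    assume A: "Aev n E vs"
    show "\<forall>e\<in>Jp n vs. E e = (e \<in> PE vs)"
    proof
      fix e assume "e \<in> Jp n vs"
      then obtain u w where e: "e = {u, w}" "u \<in> set vs" "w < n" "u \<noteq> w" unfolding Jp_def by blast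
      then have "E {u, w} \<longleftrightarrow> (\<exists>i. Suc i < length vs \<and> {u, w} = {vs ! i, vs ! Suc i})"
        using A unfolding Aev_def by blast
      then show "E e = (e \<in> PE vs)" using e(1) unfolding PE_def by (simp add: conj_commute)
    qed
  next
    assume B: "\<forall>e\<in>Jp n vs. E e = (e \<in> PE vs)"
    show "Aev n E vs" unfolding Aev_def
    proof (intro ballI allI impI)
      fix u w assume "u \<in> set vs" "w < n" "u \<noteq> w"
      then have "{u, w} \<in> Jp n vs" unfolding Jp_def by blast
      then show "E {u, w} \<longleftrightarrow> (\<exists>i. Suc i < length vs \<and> {u, w} = {vs ! i, vs ! Suc i})"
        using B unfolding PE_def by (simp add: conj_commute)
    qed
  qed
  then show ?thesis by simp
qed

lemma Jp_sub: "set vs \<subseteq> {..<n} \<Longrightarrow> Jp n vs \<subseteq> vpairs n"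
  unfolding Jp_def vpairs_def by (auto simp: card_insert_if)

lemma Aev_path: "Aev n E vs \<Longrightarrow> distinct vs \<Longrightarrow> set vs \<subseteq> {..<n} \<Longrightarrow>
    path_component n E (length vs) (set vs)"
  unfolding Aev_def path_component_def by (intro conjI exI[of _ vs]) auto

lemma AevD: "Aev n E vs \<Longrightarrow> u \<in> set vs \<Longrightarrow> w < n \<Longrightarrow> u \<noteq> w \<Longrightarrow>
   E {u, w} \<longleftrightarrow> (\<exists>i. Suc i < length vs \<and> {u, w} = {vs ! i, vs ! Suc i})"
  unfolding Aev_def by blast

lemma pair_mem: "Suc j < length vs \<Longrightarrow> b \<in> {vs ! j, vs ! Suc j} \<Longrightarrow> b \<in> set vs"
  by auto

lemma step_up:
  assumes A: "Aev n E vs" and A': "Aev n E vs'" and d': "distinct vs'" and s': "set vs' \<subseteq> {..<n}"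
    and i: "Suc i < length vs'" and m: "vs' ! i \<in> set vs"
  shows "vs' ! Suc i \<in> set vs"
proof -
  let ?a = "vs' ! i" and ?b = "vs' ! Suc i"
  have ab: "?a \<noteq> ?b" using d' i by (simp add: nth_eq_iff_index_eq)
  have bn: "?b < n" using s' i nth_mem by blast
  have an: "?a \<in> set vs'" using i by simp
  have "E {?a, ?b}" using AevD[OF A' an bn ab] i by blast
  then obtain j where j: "Suc j < length vs" and eq: "{?a, ?b} = {vs ! j, vs ! Suc j}"
    using AevD[OF A m bn ab] by blast
  have "?b \<in> {?a, ?b}" by simp
  then have "?b \<in> {vs ! j, vs ! Suc j}" unfolding eq .
  then show ?thesis using pair_mem[OF j] by blast
qed

lemma step_down:
  assumes A: "Aev n E vs" and A': "Aev n E vs'" and d': "distinct vs'" and s': "set vs' \<subseteq> {..<n}"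
    and i: "Suc i < length vs'" and m: "vs' ! Suc i \<in> set vs"
  shows "vs' ! i \<in> set vs"
proof -
  let ?a = "vs' ! i" and ?b = "vs' ! Suc i"
  have ab: "?b \<noteq> ?a" using d' i by (simp add: nth_eq_iff_index_eq)
  have an: "?a < n" using s' i by (meson Suc_lessD lessThan_iff nth_mem subset_eq)
  have bn: "?b \<in> set vs'" using i by simp
  have "E {?b, ?a}" using AevD[OF A' bn an ab] i by (auto simp: insert_commute)
  then obtain j where j: "Suc j < length vs" and eq: "{?b, ?a} = {vs ! j, vs ! Suc j}"
    using AevD[OF A m an ab] by blast
  have "?a \<in> {?b, ?a}" by simp
  then have "?a \<in> {vs ! j, vs ! Suc j}" unfolding eq .
  then show ?thesis using pair_mem[OF j] by blast
qed


lemma overlap_sub: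
  assumes A: "Aev n E vs" and A': "Aev n E vs'" and d': "distinct vs'" and s': "set vs' \<subseteq> {..<n}"
    and ov: "set vs \<inter> set vs' \<noteq> {}"
  shows "set vs' \<subseteq> set vs"
proof -
  obtain m where m: "m < length vs'" "vs' ! m \<in> set vs"
    using ov by (metis disjoint_iff in_set_conv_nth)
  have up: "m + d < length vs' \<Longrightarrow> vs' ! (m + d) \<in> set vs" for d
  proof (induction d)
    case 0 then show ?case using m by simp
  next
    case (Suc d)
    then show ?case using step_up[OF A A' d' s', of "m + d"] by simp
  qed
  have down: "d \<le> m \<Longrightarrow> vs' ! (m - d) \<in> set vs" for d
  proof (induction d)
    case 0 then show ?case using m by simp
  next
    case (Suc d)
    then have e: "Suc (m - Suc d) = m - d" by simp
    have "Suc (m - Suc d) < length vs'" using e Suc.prems m by simp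
    then show ?case using step_down[OF A A' d' s', of "m - Suc d"] Suc e by simp
  qed
  show ?thesis
  proof
    fix x assume "x \<in> set vs'"
    then obtain j where j: "j < length vs'" "x = vs' ! j" by (metis in_set_conv_nth)
    show "x \<in> set vs"
    proof (cases "m \<le> j")
      case True then show ?thesis using up[of "j - m"] j by simp
    next
      case False then show ?thesis using down[of "m - j"] j by simp
    qed
  qed
qed

lemma uniq:
  assumes A: "Aev n E vs" and A': "Aev n E vs'" and d: "distinct vs" and d': "distinct vs'"
    and s: "set vs \<subseteq> {..<n}" and len: "length vs = length vs'"
    and h: "vs ! 0 = vs' ! 0"
  shows "vs = vs'"
proof -
  have "\<forall>j\<le>i. j < length vs \<longrightarrow> vs ! j = vs' ! j" for i
  proof (induction i)
    case 0 then show ?case using h by simp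
  next
    case (Suc i)
    show ?case
    proof (intro allI impI)
      fix j assume j: "j \<le> Suc i" "j < length vs"
      show "vs ! j = vs' ! j"
      proof (cases "j \<le> i")
        case True then show ?thesis using Suc j by simp
      next
        case False
        then have jj: "j = Suc i" using j by simp
        let ?a = "vs ! i" and ?b = "vs ! Suc i"
        have si: "Suc i < length vs" using j jj by simp
        have ab: "?a \<noteq> ?b" using d si by (simp add: nth_eq_iff_index_eq)
        have bn: "?b < n" using s si nth_mem by blast
        have ai: "?a \<in> set vs" using si by simp
        have "E {?a, ?b}" using AevD[OF A ai bn ab] si by blast
        moreover have aa: "?a = vs' ! i" using Suc si by simp
        moreover have "?a \<in> set vs'" using aa si len by (metis Suc_lessD nth_mem)
        ultimately obtain k where k: "Suc k < length vs'" "{?a, ?b} = {vs' ! k, vs' ! Suc k}"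
          using AevD[OF A' _ bn ab] by blast
        have cs: "(?a = vs' ! k \<and> ?b = vs' ! Suc k) \<or> (?a = vs' ! Suc k \<and> ?b = vs' ! k)"
          using k(2) by (simp add: doubleton_eq_iff)
        show ?thesis
        proof (cases "?a = vs' ! k \<and> ?b = vs' ! Suc k")
          case True
          then have "vs' ! i = vs' ! k" using aa by simp
          then have "k = i" using d' k si len by (simp add: nth_eq_iff_index_eq)
          then show ?thesis using True jj by simp
        next
          case False
          then have a2: "?a = vs' ! Suc k" and b2: "?b = vs' ! k" using cs by auto
          then have "vs' ! i = vs' ! Suc k" using aa by simp
          then have ki: "Suc k = i" using d' k si len by (simp add: nth_eq_iff_index_eq)
          then have "vs ! k = vs' ! k" using Suc.IH si by simp
          then have "?b = vs ! k" using b2 by simp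
          then show ?thesis using d si ki by (simp add: nth_eq_iff_index_eq)
        qed
      qed
    qed
  qed
  then show ?thesis using len by (metis le_refl nth_equalityI)
qed



lemma finite_Jp: "set vs \<subseteq> {..<n} \<Longrightarrow> finite (Jp n vs)"
  using finite_subset[OF Jp_sub finite_vpairs] .

lemma prob_A: "set vs \<subseteq> {..<n} \<Longrightarrow> 0 \<le> p \<Longrightarrow> p \<le> 1 \<Longrightarrow>
  measure_pmf.prob (Gnp n p) {E. Aev n E vs} = (\<Prod>e\<in>Jp n vs. if e \<in> PE vs then p else 1 - p)"
  unfolding Aev_eq by (rule prob_fix[OF Jp_sub])

lemma PE_img: "PE vs = (\<lambda>i. {vs ! i, vs ! Suc i}) ` {..<length vs - 1}"
  unfolding PE_def by auto

lemma finite_PE: "finite (PE vs)"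
  unfolding PE_img by simp

lemma card_PE: "card (PE vs) \<le> length vs - 1"
proof -
  have "PE vs = (\<lambda>i. {vs ! i, vs ! Suc i}) ` {..<length vs - 1}"
    unfolding PE_def by auto
  then show ?thesis using card_image_le[of "{..<length vs - 1}" "\<lambda>i. {vs ! i, vs ! Suc i}"] by simp
qed

lemma card_Jp: "card (Jp n vs) \<le> length vs * n"
proof -
  have "Jp n vs \<subseteq> (\<lambda>(u, w). {u, w}) ` (set vs \<times> {..<n})"
    unfolding Jp_def by auto
  moreover have "finite ((\<lambda>(u, w). {u, w}) ` (set vs \<times> {..<n}))" by simp
  ultimately have "card (Jp n vs) \<le> card ((\<lambda>(u, w). {u, w}) ` (set vs \<times> {..<n}))"
    by (rule card_mono[rotated])
  also have "\<dots> \<le> card (set vs \<times> {..<n})" by (rule card_image_le) simp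
  also have "\<dots> \<le> length vs * n" by (simp add: card_cartesian_product card_length)
  finally show ?thesis .
qed

lemma prob_A_lower:
  assumes "set vs \<subseteq> {..<n}" "0 \<le> p" "p \<le> 1"
  shows "measure_pmf.prob (Gnp n p) {E. Aev n E vs} \<ge> p ^ (length vs - 1) * (1 - p) ^ (length vs * n)"
proof -
  have fin: "finite (Jp n vs)" using finite_Jp[OF assms(1)] .
  have "measure_pmf.prob (Gnp n p) {E. Aev n E vs} =
        (\<Prod>e\<in>Jp n vs \<inter> {e. e \<in> PE vs}. p) * (\<Prod>e\<in>Jp n vs \<inter> - {e. e \<in> PE vs}. 1 - p)"
    using prob_A[OF assms] by (simp add: prod.If_cases[OF fin])
  also have "\<dots> = p ^ card (Jp n vs \<inter> PE vs) * (1 - p) ^ card (Jp n vs - PE vs)"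
    by (simp add: Diff_eq)
  also have "\<dots> \<ge> p ^ (length vs - 1) * (1 - p) ^ (length vs * n)"
  proof (rule mult_mono)
    have "card (Jp n vs \<inter> PE vs) \<le> length vs - 1"
    proof -
      have "card (Jp n vs \<inter> PE vs) \<le> card (PE vs)"
        by (rule card_mono) (auto simp: finite_PE)
      then show ?thesis using card_PE[of vs] by linarith
    qed
    then show "p ^ (length vs - 1) \<le> p ^ card (Jp n vs \<inter> PE vs)"
      using assms by (simp add: power_decreasing)
    have "card (Jp n vs - PE vs) \<le> length vs * n"
      using card_Jp[of n vs] card_mono[OF fin Diff_subset[of _ "PE vs"]] by linarith
    then show "(1 - p) ^ (length vs * n) \<le> (1 - p) ^ card (Jp n vs - PE vs)"
      using assms by (simp add: power_decreasing)
  qed (use assms in auto)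
  finally show ?thesis .
qed


lemma Jp_PE_disj:
  assumes "set vs \<inter> set vs' = {}"
  shows "Jp n vs \<inter> PE vs' = {}"
proof -
  have "False" if t1: "e \<in> Jp n vs" and t2: "e \<in> PE vs'" for e
  proof -
    obtain u w where e: "e = {u, w}" "u \<in> set vs" using t1 unfolding Jp_def by blast
    obtain i where i: "Suc i < length vs'" "e = {vs' ! i, vs' ! Suc i}" using t2 unfolding PE_def by blast
    have "u \<in> {vs' ! i, vs' ! Suc i}" using e i by blast
    then have "u \<in> set vs'" using i(1) by auto
    then show False using e(2) assms by blast
  qed
  then show ?thesis by blast
qed

lemma card_Jp_inter:
  assumes "set vs \<inter> set vs' = {}"
  shows "card (Jp n vs \<inter> Jp n vs') \<le> length vs * length vs'"
proof -
  have "Jp n vs \<inter> Jp n vs' \<subseteq> (\<lambda>(u, w). {u, w}) ` (set vs \<times> set vs')"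
  proof
    fix e assume "e \<in> Jp n vs \<inter> Jp n vs'"
    then obtain u w u' w' where e: "e = {u, w}" "u \<in> set vs" "e = {u', w'}" "u' \<in> set vs'"
      unfolding Jp_def by blast
    then have "u' \<noteq> u" using assms by blast
    then have "u' = w" using e by (metis doubleton_eq_iff)
    then have "e = {u, u'}" using e by simp
    then show "e \<in> (\<lambda>(u, w). {u, w}) ` (set vs \<times> set vs')" using e by blast
  qed
  moreover have "finite ((\<lambda>(u, w). {u, w}) ` (set vs \<times> set vs'))" by simp
  ultimately have "card (Jp n vs \<inter> Jp n vs') \<le> card ((\<lambda>(u, w). {u, w}) ` (set vs \<times> set vs'))"
    by (rule card_mono[rotated])
  also have "\<dots> \<le> card (set vs \<times> set vs')" by (rule card_image_le) simp
  also have "\<dots> \<le> length vs * length vs'"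
    by (simp add: card_cartesian_product card_length mult_le_mono)
  finally show ?thesis .
qed

lemma prob_AA:
  assumes s: "set vs \<subseteq> {..<n}" and s': "set vs' \<subseteq> {..<n}" and disj: "set vs \<inter> set vs' = {}"
    and p: "0 \<le> p" "p \<le> 1"
  shows "measure_pmf.prob (Gnp n p) ({E. Aev n E vs} \<inter> {E. Aev n E vs'}) * (1 - p) ^ card (Jp n vs \<inter> Jp n vs')
       = measure_pmf.prob (Gnp n p) {E. Aev n E vs} * measure_pmf.prob (Gnp n p) {E. Aev n E vs'}"
proof -
  define J where "J = Jp n vs"
  define J' where "J' = Jp n vs'"
  define P where "P = PE vs"
  define P' where "P' = PE vs'"
  define w where "w = (\<lambda>e. if e \<in> P \<union> P' then p else 1 - p)"
  have h1: "J \<inter> P' = {}" unfolding J_def P'_def by (rule Jp_PE_disj[OF disj])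
  have h2: "J' \<inter> P = {}" unfolding J'_def P_def by (rule Jp_PE_disj) (use disj in blast)
  have fJ: "finite J" unfolding J_def by (rule finite_Jp[OF s])
  have fJ': "finite J'" unfolding J'_def by (rule finite_Jp[OF s'])
  have "{E. Aev n E vs} \<inter> {E. Aev n E vs'} = {E. \<forall>e\<in>J \<union> J'. E e = (e \<in> P \<union> P')}"
  proof -
    have "{E. Aev n E vs} \<inter> {E. Aev n E vs'} = {E. \<forall>e\<in>J. E e = (e \<in> P)} \<inter> {E. \<forall>e\<in>J'. E e = (e \<in> P')}"
      unfolding Aev_eq J_def J'_def P_def P'_def by simp
    also have "\<dots> = {E. \<forall>e\<in>J \<union> J'. E e = (e \<in> P \<union> P')}"
      using h1 h2 by blast
    finally show ?thesis .
  qed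
  moreover have "measure_pmf.prob (Gnp n p) {E. \<forall>e\<in>J \<union> J'. E e = (e \<in> P \<union> P')} = prod w (J \<union> J')"
    unfolding w_def by (rule prob_fix) (use Jp_sub s s' p in \<open>auto simp: J_def J'_def\<close>)
  ultimately have e1: "measure_pmf.prob (Gnp n p) ({E. Aev n E vs} \<inter> {E. Aev n E vs'}) = prod w (J \<union> J')"
    by simp
  have e2: "measure_pmf.prob (Gnp n p) {E. Aev n E vs} = prod w J"
    unfolding prob_A[OF s p] J_def[symmetric] P_def[symmetric] w_def
    by (rule prod.cong) (use h1 in auto)
  have e3: "measure_pmf.prob (Gnp n p) {E. Aev n E vs'} = prod w J'"
    unfolding prob_A[OF s' p] J'_def[symmetric] P'_def[symmetric] w_def
    by (rule prod.cong) (use h2 in auto)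
  have e4: "prod w (J \<inter> J') = (1 - p) ^ card (J \<inter> J')"
  proof -
    have "prod w (J \<inter> J') = prod (\<lambda>_. 1 - p) (J \<inter> J')"
      by (rule prod.cong) (use h1 h2 in \<open>auto simp: w_def\<close>)
    then show ?thesis by simp
  qed
  show ?thesis
    using prod.union_inter[OF fJ fJ', of w] e1 e2 e3 e4 unfolding J_def J'_def by simp
qed

lemma prob_AA_le:
  assumes s: "set vs \<subseteq> {..<n}" and s': "set vs' \<subseteq> {..<n}" and disj: "set vs \<inter> set vs' = {}"
    and p: "0 \<le> p" "p < 1" and k: "length vs = k" "length vs' = k"
  shows "measure_pmf.prob (Gnp n p) ({E. Aev n E vs} \<inter> {E. Aev n E vs'})
       \<le> measure_pmf.prob (Gnp n p) {E. Aev n E vs} * measure_pmf.prob (Gnp n p) {E. Aev n E vs'} / (1 - p) ^ (k * k)"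
proof -
  let ?c = "card (Jp n vs \<inter> Jp n vs')"
  have c: "?c \<le> k * k" using card_Jp_inter[OF disj, of n] k by simp
  have pos: "(1 - p) ^ (k * k) > 0" using p by simp
  have le: "(1 - p) ^ (k * k) \<le> (1 - p) ^ ?c" using p c by (simp add: power_decreasing)
  have "measure_pmf.prob (Gnp n p) ({E. Aev n E vs} \<inter> {E. Aev n E vs'}) * (1 - p) ^ (k * k)
     \<le> measure_pmf.prob (Gnp n p) ({E. Aev n E vs} \<inter> {E. Aev n E vs'}) * (1 - p) ^ ?c"
    by (rule mult_left_mono[OF le]) simp
  also have "\<dots> = measure_pmf.prob (Gnp n p) {E. Aev n E vs} * measure_pmf.prob (Gnp n p) {E. Aev n E vs'}"
    by (rule prob_AA[OF s s' disj]) (use p in auto)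
  finally show ?thesis using pos by (simp add: pos_le_divide_eq)
qed



definition Lk :: "nat \<Rightarrow> nat \<Rightarrow> nat list set" where
  "Lk n k = {vs. length vs = k \<and> distinct vs \<and> set vs \<subseteq> {..<n}}"

definition Nc :: "nat \<Rightarrow> nat \<Rightarrow> (nat set \<Rightarrow> bool) \<Rightarrow> real" where
  "Nc n k E = (\<Sum>vs\<in>Lk n k. indicator {E. Aev n E vs} E)"

lemma finite_Lk: "finite (Lk n k)"
proof -
  have "Lk n k \<subseteq> {xs. set xs \<subseteq> {..<n} \<and> length xs = k}" unfolding Lk_def by auto
  then show ?thesis using finite_lists_length_eq[of "{..<n}" k] finite_subset by blast
qed

lemma Nc_card: "Nc n k E = real (card {vs \<in> Lk n k. Aev n E vs})"
proof -
  have "Nc n k E = (\<Sum>vs\<in>Lk n k. of_bool (Aev n E vs))"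
    unfolding Nc_def indicator_def by simp
  also have "\<dots> = real (card (Lk n k \<inter> {vs. Aev n E vs}))"
    using finite_Lk by simp
  finally show ?thesis by (simp add: Int_def)
qed

lemma count_ov:
  assumes vs: "vs \<in> Lk n k" and A: "Aev n E vs" and k: "k \<ge> 1"
  shows "card {vs' \<in> Lk n k. Aev n E vs' \<and> set vs \<inter> set vs' \<noteq> {}} \<le> k"
proof -
  let ?S = "{vs' \<in> Lk n k. Aev n E vs' \<and> set vs \<inter> set vs' \<noteq> {}}"
  have inj: "inj_on (\<lambda>vs'. vs' ! 0) ?S"
  proof (rule inj_onI)
    fix x y assume x: "x \<in> ?S" and y: "y \<in> ?S" and h: "x ! 0 = y ! 0"
    show "x = y" by (rule uniq[of n E x y]) (use x y h in \<open>auto simp: Lk_def\<close>)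
  qed
  have img: "(\<lambda>vs'. vs' ! 0) ` ?S \<subseteq> set vs"
  proof
    fix z assume "z \<in> (\<lambda>vs'. vs' ! 0) ` ?S"
    then obtain vs' where v: "vs' \<in> ?S" "z = vs' ! 0" by blast
    then have "set vs' \<subseteq> set vs"
      using overlap_sub[OF A, of vs'] by (auto simp: Lk_def)
    moreover have "vs' ! 0 \<in> set vs'" using v k by (auto simp: Lk_def)
    ultimately show "z \<in> set vs" using v by blast
  qed
  have "card ?S = card ((\<lambda>vs'. vs' ! 0) ` ?S)" using card_image[OF inj] by simp
  also have "\<dots> \<le> card (set vs)" by (rule card_mono[OF finite_set img])
  also have "\<dots> = k" using vs by (simp add: Lk_def distinct_card)
  finally show ?thesis .
qed

lemma two_comp:
  assumes k: "k \<ge> 1" and N: "Nc n k E > real k"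
  shows "\<exists>C1 C2. C1 \<noteq> C2 \<and> path_component n E k C1 \<and> path_component n E k C2"
proof -
  let ?T = "{vs \<in> Lk n k. Aev n E vs}"
  have cT: "card ?T > k" using N unfolding Nc_card by simp
  then have "?T \<noteq> {}" by (metis card.empty not_less0)
  then obtain vs0 where v0: "vs0 \<in> Lk n k" "Aev n E vs0" by blast
  let ?O = "{vs' \<in> Lk n k. Aev n E vs' \<and> set vs0 \<inter> set vs' \<noteq> {}}"
  have "card ?O \<le> k" by (rule count_ov[OF v0 k])
  have "\<not> ?T \<subseteq> ?O"
  proof
    assume "?T \<subseteq> ?O"
    then have "card ?T \<le> card ?O" by (intro card_mono) (auto intro: finite_subset[OF _ finite_Lk])
    then show False using cT \<open>card ?O \<le> k\<close> by simp
  qed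
  then obtain vs1 where v1: "vs1 \<in> Lk n k" "Aev n E vs1" "set vs0 \<inter> set vs1 = {}" by blast
  have ne: "set vs0 \<noteq> {}" using v0 k by (auto simp: Lk_def)
  have "set vs0 \<noteq> set vs1" using ne v1(3) by auto
  moreover have "path_component n E k (set vs0)" using Aev_path[OF v0(2)] v0(1) by (auto simp: Lk_def)
  moreover have "path_component n E k (set vs1)" using Aev_path[OF v1(2)] v1(1) by (auto simp: Lk_def)
  ultimately show ?thesis by blast
qed

lemma pointwise_ov:
  assumes vs: "vs \<in> Lk n k" and k: "k \<ge> 1"
  shows "(\<Sum>vs'\<in>{vs' \<in> Lk n k. set vs \<inter> set vs' \<noteq> {}}. indicator ({E. Aev n E vs} \<inter> {E. Aev n E vs'}) E)
         \<le> real k * indicator {E. Aev n E vs} E"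
proof (cases "Aev n E vs")
  case False
  then show ?thesis by (simp add: indicator_def)
next
  case True
  have fin: "finite {vs' \<in> Lk n k. set vs \<inter> set vs' \<noteq> {}}" using finite_Lk by simp
  have "(\<Sum>vs'\<in>{vs' \<in> Lk n k. set vs \<inter> set vs' \<noteq> {}}. indicator ({E. Aev n E vs} \<inter> {E. Aev n E vs'}) E)
     = (\<Sum>vs'\<in>{vs' \<in> Lk n k. set vs \<inter> set vs' \<noteq> {}}. of_bool (Aev n E vs'))"
    using True by (intro sum.cong) (auto simp: indicator_def)
  also have "\<dots> = real (card ({vs' \<in> Lk n k. set vs \<inter> set vs' \<noteq> {}} \<inter> {vs'. Aev n E vs'}))"
    using fin by simp
  also have "{vs' \<in> Lk n k. set vs \<inter> set vs' \<noteq> {}} \<inter> {vs'. Aev n E vs'}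
      = {vs' \<in> Lk n k. Aev n E vs' \<and> set vs \<inter> set vs' \<noteq> {}}" by blast
  also have "real (card \<dots>) \<le> real k" using count_ov[OF vs True k] by simp
  finally show ?thesis using True by simp
qed



lemma intb: "(\<And>x. \<bar>f x\<bar> \<le> (B::real)) \<Longrightarrow> integrable (measure_pmf M) f"
  by (rule measure_pmf.integrable_const_bound[where B = B]) auto

lemma Nc_bound: "\<bar>Nc n k E\<bar> \<le> real (card (Lk n k))"
proof -
  have "card {vs \<in> Lk n k. Aev n E vs} \<le> card (Lk n k)" by (rule card_mono[OF finite_Lk]) auto
  then show ?thesis unfolding Nc_card by simp
qed

lemma prob_int: "measure_pmf.prob M X = measure_pmf.expectation M (indicator X)"
  by simp

lemma E_Nc: "measure_pmf.expectation (Gnp n p) (Nc n k) = (\<Sum>vs\<in>Lk n k. measure_pmf.prob (Gnp n p) {E. Aev n E vs})"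
  unfolding Nc_def
  by (subst Bochner_Integration.integral_sum) (auto intro!: intb[where B=1] simp: indicator_def)

lemma Nc_sq: "(Nc n k E)^2 = (\<Sum>vs\<in>Lk n k. \<Sum>vs'\<in>Lk n k. indicator ({E. Aev n E vs} \<inter> {E. Aev n E vs'}) E)"
  unfolding Nc_def power2_eq_square sum_product indicator_inter_arith ..

lemma E_Nc2:
  fixes n k :: nat and p :: real
  assumes k: "k \<ge> 1" and p: "0 \<le> p" "p < 1"
  defines "\<mu> \<equiv> (\<Sum>vs\<in>Lk n k. measure_pmf.prob (Gnp n p) {E. Aev n E vs})"
  shows "measure_pmf.expectation (Gnp n p) (\<lambda>E. (Nc n k E)^2) \<le> real k * \<mu> + \<mu>^2 / (1 - p) ^ (k * k)"
proof -
  let ?M = "Gnp n p"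
  let ?A = "\<lambda>vs. {E. Aev n E vs}"
  let ?O = "\<lambda>vs. {vs' \<in> Lk n k. set vs \<inter> set vs' \<noteq> {}}"
  let ?D = "\<lambda>vs. {vs' \<in> Lk n k. set vs \<inter> set vs' = {}}"
  let ?c0 = "(1 - p) ^ (k * k)"
  have c0: "?c0 > 0" using p by simp
  define g where "g = (\<lambda>E. \<Sum>vs\<in>Lk n k. (real k * indicator (?A vs) E
        + (\<Sum>vs'\<in>?D vs. indicator (?A vs \<inter> ?A vs') E)))"
  have split: "(\<Sum>vs'\<in>Lk n k. f vs') = (\<Sum>vs'\<in>?O vs. f vs') + (\<Sum>vs'\<in>?D vs. f vs')" for vs and f :: "nat list \<Rightarrow> real"
  proof -
    have "Lk n k = ?O vs \<union> ?D vs" by blast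
    moreover have "?O vs \<inter> ?D vs = {}" by blast
    ultimately show ?thesis using finite_Lk by (metis (no_types, lifting) finite_Un sum.union_disjoint)
  qed
  have pw: "(Nc n k E)^2 \<le> g E" for E
  proof -
    have "(Nc n k E)^2 = (\<Sum>vs\<in>Lk n k. (\<Sum>vs'\<in>?O vs. indicator (?A vs \<inter> ?A vs') E)
                                   + (\<Sum>vs'\<in>?D vs. indicator (?A vs \<inter> ?A vs') E))"
      unfolding Nc_sq by (rule sum.cong[OF refl]) (rule split)
    also have "\<dots> \<le> g E" unfolding g_def
      by (rule sum_mono) (use pointwise_ov[OF _ k] in auto)
    finally show ?thesis .
  qed
  have int_g: "integrable ?M g"
    unfolding g_def by (intro Bochner_Integration.integrable_sum Bochner_Integration.integrable_add
        Bochner_Integration.integrable_mult_right) (auto intro!: intb[where B=1] simp: indicator_def)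
  have int_sq: "integrable ?M (\<lambda>E. (Nc n k E)^2)"
  proof (rule intb[where B = "real (card (Lk n k))^2"])
    fix E show "\<bar>(Nc n k E)^2\<bar> \<le> real (card (Lk n k))^2"
      using power_mono[OF Nc_bound[of n k E] abs_ge_zero, of 2] by simp
  qed
  have "measure_pmf.expectation ?M (\<lambda>E. (Nc n k E)^2) \<le> measure_pmf.expectation ?M g"
    by (rule integral_mono[OF int_sq int_g pw])
  also have "measure_pmf.expectation ?M g = (\<Sum>vs\<in>Lk n k. real k * measure_pmf.prob ?M (?A vs)
        + (\<Sum>vs'\<in>?D vs. measure_pmf.prob ?M (?A vs \<inter> ?A vs')))"
  proof -
    have ii: "integrable ?M (indicator X :: _ \<Rightarrow> real)" for X :: "(nat set \<Rightarrow> bool) set"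
      by (rule intb[where B=1]) (simp add: indicator_def)
    have i2: "integrable ?M (\<lambda>E. real k * indicator (?A vs) E
        + (\<Sum>vs'\<in>?D vs. indicator (?A vs \<inter> ?A vs') E))" for vs
      by (intro Bochner_Integration.integrable_add Bochner_Integration.integrable_mult_right
          Bochner_Integration.integrable_sum ii)
    have e: "measure_pmf.expectation ?M (\<lambda>E. real k * indicator (?A vs) E
        + (\<Sum>vs'\<in>?D vs. indicator (?A vs \<inter> ?A vs') E))
        = real k * measure_pmf.prob ?M (?A vs) + (\<Sum>vs'\<in>?D vs. measure_pmf.prob ?M (?A vs \<inter> ?A vs'))" for vs
    proof -
      have "measure_pmf.expectation ?M (\<lambda>E. real k * indicator (?A vs) E
        + (\<Sum>vs'\<in>?D vs. indicator (?A vs \<inter> ?A vs') E))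
        = measure_pmf.expectation ?M (\<lambda>E. real k * indicator (?A vs) E)
          + measure_pmf.expectation ?M (\<lambda>E. \<Sum>vs'\<in>?D vs. indicator (?A vs \<inter> ?A vs') E)"
        by (rule Bochner_Integration.integral_add)
           (intro Bochner_Integration.integrable_mult_right ii, intro Bochner_Integration.integrable_sum ii)
      also have "measure_pmf.expectation ?M (\<lambda>E. \<Sum>vs'\<in>?D vs. indicator (?A vs \<inter> ?A vs') E :: real)
          = (\<Sum>vs'\<in>?D vs. measure_pmf.expectation ?M (indicator (?A vs \<inter> ?A vs')))"
        by (rule Bochner_Integration.integral_sum) (rule ii)
      finally show ?thesis by simp
    qed
    have "measure_pmf.expectation ?M g = (\<Sum>vs\<in>Lk n k. measure_pmf.expectation ?M (\<lambda>E. real k * indicator (?A vs) E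
        + (\<Sum>vs'\<in>?D vs. indicator (?A vs \<inter> ?A vs') E)))"
      unfolding g_def by (rule Bochner_Integration.integral_sum) (rule i2)
    then show ?thesis using e by simp
  qed
  also have "\<dots> \<le> (\<Sum>vs\<in>Lk n k. real k * measure_pmf.prob ?M (?A vs)
        + (\<Sum>vs'\<in>Lk n k. measure_pmf.prob ?M (?A vs) * measure_pmf.prob ?M (?A vs') / ?c0))"
  proof (rule sum_mono)
    fix vs assume vs: "vs \<in> Lk n k"
    have "(\<Sum>vs'\<in>?D vs. measure_pmf.prob ?M (?A vs \<inter> ?A vs'))
        \<le> (\<Sum>vs'\<in>?D vs. measure_pmf.prob ?M (?A vs) * measure_pmf.prob ?M (?A vs') / ?c0)"
      by (rule sum_mono, rule prob_AA_le) (use vs p in \<open>auto simp: Lk_def\<close>)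
    also have "\<dots> \<le> (\<Sum>vs'\<in>Lk n k. measure_pmf.prob ?M (?A vs) * measure_pmf.prob ?M (?A vs') / ?c0)"
      by (rule sum_mono2[OF finite_Lk]) (use c0 in auto)
    finally show "real k * measure_pmf.prob ?M (?A vs) + (\<Sum>vs'\<in>?D vs. measure_pmf.prob ?M (?A vs \<inter> ?A vs'))
        \<le> real k * measure_pmf.prob ?M (?A vs) + (\<Sum>vs'\<in>Lk n k. measure_pmf.prob ?M (?A vs) * measure_pmf.prob ?M (?A vs') / ?c0)"
      by simp
  qed
  also have "\<dots> = real k * \<mu> + \<mu>^2 / ?c0"
  proof -
    let ?P = "\<lambda>vs. measure_pmf.prob ?M (?A vs)"
    have a: "(\<Sum>vs\<in>Lk n k. \<Sum>vs'\<in>Lk n k. ?P vs * ?P vs' / ?c0) = (\<Sum>vs\<in>Lk n k. \<Sum>vs'\<in>Lk n k. ?P vs * ?P vs') / ?c0"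
      by (simp add: sum_divide_distrib)
    have b: "(\<Sum>vs\<in>Lk n k. \<Sum>vs'\<in>Lk n k. ?P vs * ?P vs') = \<mu> * \<mu>"
      unfolding \<mu>_def sum_product ..
    have c: "(\<Sum>vs\<in>Lk n k. real k * ?P vs) = real k * \<mu>"
      unfolding \<mu>_def sum_distrib_left ..
    show ?thesis unfolding sum.distrib a b c power2_eq_square ..
  qed
  finally show ?thesis .
qed



lemma core:
  fixes n k :: nat and p :: real
  assumes k: "k \<ge> 1" and p: "0 \<le> p" "p < 1"
  defines "\<mu> \<equiv> (\<Sum>vs\<in>Lk n k. measure_pmf.prob (Gnp n p) {E. Aev n E vs})"
  assumes gt: "\<mu> > real k"
  shows "1 - measure_pmf.prob (Gnp n p) {E. \<exists>C1 C2. C1 \<noteq> C2 \<and> path_component n E k C1 \<and> path_component n E k C2}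
     \<le> (real k * \<mu> + \<mu>^2 * (1 / (1 - p) ^ (k * k) - 1)) / (\<mu> - real k)^2"
proof -
  let ?M = "Gnp n p"
  let ?G = "{E. \<exists>C1 C2. C1 \<noteq> C2 \<and> path_component n E k C1 \<and> path_component n E k C2}"
  define u where "u = (\<lambda>E. (Nc n k E - \<mu>)^2)"
  define c where "c = (\<mu> - real k)^2"
  have c0: "c > 0" using gt by (simp add: c_def)
  have sub: "- ?G \<subseteq> {E \<in> space ?M. c \<le> u E}"
  proof
    fix E assume "E \<in> - ?G"
    then have "\<not> Nc n k E > real k" using two_comp[OF k, of n E] by blast
    then have "Nc n k E \<le> real k" by simp
    then have "\<mu> - real k \<le> \<mu> - Nc n k E" by simp
    then have "(\<mu> - real k)^2 \<le> (\<mu> - Nc n k E)^2" using gt by (intro power_mono) auto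
    then show "E \<in> {E \<in> space ?M. c \<le> u E}" by (simp add: c_def u_def power2_commute)
  qed
  have intN: "integrable ?M (Nc n k)" by (rule intb[where B = "real (card (Lk n k))"]) (rule Nc_bound)
  have intN2: "integrable ?M (\<lambda>E. (Nc n k E)^2)"
  proof (rule intb[where B = "real (card (Lk n k))^2"])
    fix E show "\<bar>(Nc n k E)^2\<bar> \<le> real (card (Lk n k))^2"
      using power_mono[OF Nc_bound[of n k E] abs_ge_zero, of 2] by simp
  qed
  have intNm: "integrable ?M (\<lambda>E. 2 * Nc n k E * \<mu>)"
    by (intro Bochner_Integration.integrable_mult_left Bochner_Integration.integrable_mult_right intN)
  have intNm2: "integrable ?M (\<lambda>E. 2 * \<mu> * Nc n k E)"
    by (intro Bochner_Integration.integrable_mult_right intN)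
  have intu: "integrable ?M u"
    unfolding u_def power2_diff
    by (intro intNm Bochner_Integration.integrable_diff Bochner_Integration.integrable_add
        Bochner_Integration.integrable_mult_right intN intN2) simp
  have Eu: "measure_pmf.expectation ?M u = measure_pmf.expectation ?M (\<lambda>E. (Nc n k E)^2) - \<mu>^2"
  proof -
    have ic: "integrable ?M (\<lambda>E. \<mu>^2)" by simp
    have "measure_pmf.expectation ?M u = measure_pmf.expectation ?M (\<lambda>E. (Nc n k E)^2 + \<mu>^2)
        - measure_pmf.expectation ?M (\<lambda>E. 2 * Nc n k E * \<mu>)"
      unfolding u_def power2_diff
      by (rule Bochner_Integration.integral_diff[OF Bochner_Integration.integrable_add[OF intN2 ic] intNm])
    also have "measure_pmf.expectation ?M (\<lambda>E. (Nc n k E)^2 + \<mu>^2)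
        = measure_pmf.expectation ?M (\<lambda>E. (Nc n k E)^2) + \<mu>^2"
      by (subst Bochner_Integration.integral_add[OF intN2 ic]) simp
    also have "measure_pmf.expectation ?M (\<lambda>E. 2 * Nc n k E * \<mu>) = 2 * \<mu> * \<mu>"
    proof -
      have "measure_pmf.expectation ?M (\<lambda>E. 2 * Nc n k E * \<mu>) = 2 * measure_pmf.expectation ?M (Nc n k) * \<mu>"
        by simp
      then show ?thesis using E_Nc[of n p k] unfolding \<mu>_def by simp
    qed
    finally show ?thesis by (simp add: power2_eq_square)
  qed
  have "1 - measure_pmf.prob ?M ?G = measure_pmf.prob ?M (- ?G)"
    using measure_pmf.prob_compl[of ?G ?M] by (simp add: Compl_eq_Diff_UNIV)
  also have "\<dots> \<le> measure_pmf.prob ?M {E \<in> space ?M. c \<le> u E}"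
    by (rule measure_pmf.finite_measure_mono[OF sub]) simp
  also have "\<dots> \<le> measure_pmf.expectation ?M u / c"
    by (rule integral_Markov_inequality_measure[OF intu, of UNIV]) (auto simp: u_def c0)
  also have "\<dots> \<le> (real k * \<mu> + \<mu>^2 / (1 - p) ^ (k * k) - \<mu>^2) / c"
    unfolding Eu using E_Nc2[OF k p, of n] c0 unfolding \<mu>_def by (simp add: divide_right_mono)
  also have "\<dots> = (real k * \<mu> + \<mu>^2 * (1 / (1 - p) ^ (k * k) - 1)) / (\<mu> - real k)^2"
    by (simp add: c_def algebra_simps)
  finally show ?thesis .
qed



lemma ln_1m: "0 \<le> (y::real) \<Longrightarrow> y \<le> 1/2 \<Longrightarrow> ln (1 - y) \<ge> - 2 * y"
proof -
  assume a: "0 \<le> y" "y \<le> 1/2"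
  have "- y - 2 * y^2 \<le> ln (1 - y)" by (rule ln_one_minus_pos_lower_bound[OF a])
  moreover have "y * (2 * y) \<le> y * 1" using a by (intro mult_left_mono) auto
  then have "2 * y^2 \<le> y" by (simp add: power2_eq_square)
  ultimately show ?thesis by linarith
qed

lemma lnL_bound:
  fixes R N p :: real
  defines "K \<equiv> 2 * R + 1"
  defines "lx \<equiv> ln p + (K / (2 * R)) * ln N"
  assumes R: "R \<ge> 1" and N: "N > 0" and p: "p > 0" "p \<le> 1/2"
    and pr: "12 * p * R * N \<le> ln N" and rl: "R \<le> ln N" and kn: "2 * K \<le> N" and lx6: "lx \<ge> 6"
  shows "K * ln (N - K) + 2 * R * ln p + K * N * ln (1 - p) - ln K
     \<ge> min (lx - 3) (ln N / 2 - ln (3 * ln N)) - 18 * (ln N)^2 / N"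
proof -
  have K1: "K \<ge> 3" using R by (simp add: K_def)
  have K3: "K \<le> 3 * R" using R by (simp add: K_def)
  have KN: "K / N \<le> 1/2" using kn N by (simp add: field_simps)
  have KN0: "K / N \<ge> 0" using K1 N by simp
  have "N - K = N * (1 - K / N)" using N by (simp add: field_simps)
  then have "ln (N - K) = ln N + ln (1 - K / N)" using N KN by (simp add: ln_mult)
  then have h1: "ln (N - K) \<ge> ln N - 2 * K / N" using ln_1m[OF KN0 KN] by simp
  have h2: "ln (1 - p) \<ge> - 2 * p" using ln_1m p by simp
  have "K * ln (N - K) \<ge> K * (ln N - 2 * K / N)" using h1 K1 by (intro mult_left_mono) auto
  moreover have "K * N * ln (1 - p) \<ge> K * N * (- 2 * p)" using h2 K1 N by (intro mult_left_mono) auto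
  ultimately have T: "K * ln (N - K) + 2 * R * ln p + K * N * ln (1 - p)
        \<ge> K * ln N - 2 * K * K / N + 2 * R * ln p - 2 * K * N * p"
    by (simp add: algebra_simps)
  have lxe: "2 * R * lx = 2 * R * ln p + K * ln N" using R by (simp add: lx_def field_simps)
  have lnN: "ln N \<ge> 1" using rl R by simp
  have KK: "2 * K * K / N \<le> 18 * (ln N)^2 / N"
  proof -
    have "K \<le> 3 * ln N" using K3 rl by simp
    then have "K * K \<le> (3 * ln N) * (3 * ln N)" using K1 by (intro mult_mono) auto
    then have "2 * K * K \<le> 18 * (ln N)^2" by (simp add: power2_eq_square)
    then show ?thesis using N by (simp add: divide_right_mono)
  qed
  have lnK: "ln K \<le> 2 * R" using ln_le_minus_one[of K] K1 by (simp add: K_def)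
  show ?thesis
  proof (cases "2 * K * N * p \<le> R * lx")
    case True
    have "R * (lx - 2) \<ge> 1 * (lx - 2)" using R lx6 by (intro mult_right_mono) auto
    then have "K * ln (N - K) + 2 * R * ln p + K * N * ln (1 - p) - ln K \<ge> lx - 3 - 2 * K * K / N"
      using T lxe True lnK by (simp add: algebra_simps)
    then show ?thesis using KK by linarith
  next
    case False
    then have a: "R * lx < 2 * K * N * p" by simp
    have "2 * K * N * p \<le> 6 * R * N * p" using K3 N p by (intro mult_right_mono) (auto simp: mult.assoc)
    then have b: "R * lx < 6 * R * (N * p)" using a by (simp add: algebra_simps)
    have "6 * R * 1 \<le> R * lx" using lx6 R by simp
    then have "6 * R * 1 < 6 * R * (N * p)" using b by simp
    then have Np1: "N * p > 1" using R by simp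
    then have lnNp: "ln (N * p) \<ge> 0" by simp
    have lp: "ln p = ln (N * p) - ln N" using N p by (simp add: ln_mult)
    have c: "2 * K * N * p \<le> ln N / 2"
    proof -
      have "2 * K * N * p \<le> 6 * R * N * p" using K3 N p by (intro mult_right_mono) (auto simp: mult.assoc)
      also have "\<dots> = (12 * p * R * N) / 2" by simp
      also have "\<dots> \<le> ln N / 2" using pr by (simp add: algebra_simps)
      finally show ?thesis .
    qed
    have d: "ln K \<le> ln (3 * ln N)" using K3 rl K1 by simp
    have "K * ln N + 2 * R * ln p = ln N + 2 * R * ln (N * p)"
      unfolding lp K_def by (simp add: algebra_simps)
    moreover have "2 * R * ln (N * p) \<ge> 0" using R lnNp by simp
    ultimately have "K * ln (N - K) + 2 * R * ln p + K * N * ln (1 - p) - ln K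
        \<ge> ln N / 2 - ln (3 * ln N) - 2 * K * K / N"
      using T c d by linarith
    then show ?thesis using KK by linarith
  qed
qed



lemma card_Lk_lower: "k \<le> n \<Longrightarrow> real (card (Lk n k)) \<ge> real (n - k) ^ k"
proof -
  assume kn: "k \<le> n"
  have "card (Lk n k) = \<Prod>{card {..<n} - k + 1 .. card {..<n}}"
    unfolding Lk_def using card_lists_distinct_length_eq[of "{..<n}" k] kn by simp
  then have c: "card (Lk n k) = \<Prod>{n - k + 1 .. n}" by simp
  have "real (n - k) ^ k = (\<Prod>i\<in>{n - k + 1 .. n}. real (n - k))"
    using kn by simp
  also have "\<dots> \<le> (\<Prod>i\<in>{n - k + 1 .. n}. real i)"
    by (rule prod_mono) auto
  also have "\<dots> = real (card (Lk n k))" unfolding c by simp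
  finally show ?thesis .
qed

lemma mu_lower:
  assumes "k \<le> n" "0 \<le> p" "p \<le> 1"
  shows "(\<Sum>vs\<in>Lk n k. measure_pmf.prob (Gnp n p) {E. Aev n E vs}) \<ge> real (n - k) ^ k * p ^ (k - 1) * (1 - p) ^ (k * n)"
proof -
  have "real (n - k) ^ k * (p ^ (k - 1) * (1 - p) ^ (k * n)) \<le> real (card (Lk n k)) * (p ^ (k - 1) * (1 - p) ^ (k * n))"
    by (rule mult_right_mono[OF card_Lk_lower[OF assms(1)]]) (use assms in simp)
  also have "\<dots> = (\<Sum>vs\<in>Lk n k. p ^ (k - 1) * (1 - p) ^ (k * n))" by simp
  also have "\<dots> \<le> (\<Sum>vs\<in>Lk n k. measure_pmf.prob (Gnp n p) {E. Aev n E vs})"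
  proof (rule sum_mono)
    fix vs assume "vs \<in> Lk n k"
    then show "p ^ (k - 1) * (1 - p) ^ (k * n) \<le> measure_pmf.prob (Gnp n p) {E. Aev n E vs}"
      using prob_A_lower[of vs n p] assms by (auto simp: Lk_def)
  qed
  finally show ?thesis by (simp add: mult.assoc)
qed

lemma bound_n:
  fixes n r :: nat and p F :: real
  defines "k \<equiv> 2 * r + 1"
  defines "lx \<equiv> ln p + ((2 * real r + 1) / (2 * real r)) * ln (real n)"
  assumes r: "r \<ge> 1" and n: "n > 0" and p: "p > 0" "p \<le> 1/2"
    and pr: "12 * p * real r * real n \<le> ln (real n)" and rl: "real r \<le> ln (real n)"
    and kn: "2 * k \<le> n" and lx6: "lx \<ge> 6"
    and F2: "F \<ge> ln 2" and Fle: "F \<le> min (lx - 3) (ln (real n) / 2 - ln (3 * ln (real n))) - 18 * (ln (real n))^2 / real n"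
    and dl: "(ln (real n))^2 / real n \<le> 1/2"
  shows "1 - measure_pmf.prob (Gnp n p) {E. \<exists>C1 C2. C1 \<noteq> C2 \<and> path_component n E k C1 \<and> path_component n E k C2}
     \<le> 4 * exp (- F) + 8 * ((ln (real n))^2 / real n)"
proof -
  define \<mu> where "\<mu> = (\<Sum>vs\<in>Lk n k. measure_pmf.prob (Gnp n p) {E. Aev n E vs})"
  define L where "L = real (n - k) ^ k * p ^ (k - 1) * (1 - p) ^ (k * n)"
  define \<delta> where "\<delta> = (ln (real n))^2 / real n"
  have k1: "k \<ge> 1" by (simp add: k_def)
  have kpos: "real k > 0" using k1 by simp
  have p1: "p < 1" using p by simp
  have nk: "n - k > 0" using kn k1 by simp
  have Lpos: "L > 0" unfolding L_def using nk p p1 by simp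
  have rk: "real k = 2 * real r + 1" by (simp add: k_def)
  have lnL: "ln L = real k * ln (real n - real k) + 2 * real r * ln p + real k * real n * ln (1 - p)"
  proof -
    have "real (n - k) = real n - real k" using kn by simp
    moreover have "real (k - 1) = 2 * real r" by (simp add: k_def)
    ultimately show ?thesis unfolding L_def using nk p p1
      by (simp add: ln_mult ln_realpow)
  qed
  have lb: "ln L - ln (real k) \<ge> F"
  proof -
    have "ln L - ln (real k) \<ge> min (lx - 3) (ln (real n) / 2 - ln (3 * ln (real n))) - 18 * (ln (real n))^2 / real n"
    proof -
      have a1: "1 \<le> real r" using r by simp
      have a2: "0 < real n" using n by simp
      have a7: "2 * (2 * real r + 1) \<le> real n" proof -
        have "real (2 * (2 * r + 1)) \<le> real n" using kn unfolding k_def by (rule of_nat_mono)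
        then show ?thesis by simp
      qed
      have a8: "6 \<le> ln p + (2 * real r + 1) / (2 * real r) * ln (real n)" using lx6 unfolding lx_def .
      show ?thesis unfolding lnL rk lx_def using lnL_bound[OF a1 a2 p pr rl a7 a8] .
    qed
    then show ?thesis using Fle by linarith
  qed
  have LkF: "L \<ge> real k * exp F"
  proof -
    have "ln (L / real k) \<ge> F" using lb Lpos kpos by (simp add: ln_div)
    then have "exp F \<le> exp (ln (L / real k))" by simp
    also have "exp (ln (L / real k)) = L / real k" using Lpos kpos by simp
    finally have "exp F \<le> L / real k" .
    then show ?thesis using kpos by (simp add: field_simps)
  qed
  have muL: "\<mu> \<ge> L" unfolding \<mu>_def L_def by (rule mu_lower) (use kn p1 p in auto)
  have e2: "exp (ln (2::real)) = 2" by simp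
  have "exp (ln 2) \<le> exp F" using F2 by (simp only: exp_le_cancel_iff)
  then have eF: "exp F \<ge> 2" unfolding e2 .
  have "real k * 2 \<le> real k * exp F" using eF kpos by (intro mult_left_mono) auto
  then have mu2k: "\<mu> \<ge> 2 * real k" using muL LkF by simp
  have mugt: "\<mu> > real k" using mu2k kpos by simp
  define c0 where "c0 = (1 - p) ^ (k * k)"
  have c0le: "c0 \<le> 1" unfolding c0_def using p p1 by (simp add: power_le_one)
  have kkp: "real (k * k) * p \<le> \<delta>"
  proof -
    have "real k \<le> 3 * real r" using r by (simp add: k_def)
    then have "real k * real k \<le> (3 * real r) * (3 * real r)" by (intro mult_mono) auto
    then have "real (k * k) * p \<le> 9 * real r * (real r * p)" using p by (simp add: mult_right_mono algebra_simps)
    also have "real r * p \<le> ln (real n) / (12 * real n)" using pr n by (simp add: field_simps)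
    then have "9 * real r * (real r * p) \<le> 9 * real r * (ln (real n) / (12 * real n))" using r by (intro mult_left_mono) auto
    also have "\<dots> \<le> 9 * ln (real n) * (ln (real n) / (12 * real n))"
      using rl n r by (intro mult_right_mono) auto
    also have "\<dots> \<le> \<delta>" unfolding \<delta>_def using n rl r by (simp add: power2_eq_square field_simps)
    finally show ?thesis .
  qed
  have c0ge: "c0 \<ge> 1 - \<delta>"
  proof -
    have "1 + real (k * k) * (- p) \<le> (1 + - p) ^ (k * k)"
      by (rule Bernoulli_inequality) (use p1 in simp)
    then show ?thesis using kkp unfolding c0_def by simp
  qed
  have d0: "\<delta> \<le> 1/2" using dl by (simp add: \<delta>_def)
  have c0pos: "c0 \<ge> 1/2" using c0ge d0 by simp
  have inv: "1 / c0 - 1 \<le> 2 * \<delta>"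
  proof -
    have "1 / c0 - 1 = (1 - c0) / c0" using c0pos by (simp add: field_simps)
    also have "\<dots> \<le> \<delta> / c0" using c0ge c0pos by (intro divide_right_mono) auto
    also have "\<dots> \<le> \<delta> / (1/2)" using c0pos d0 c0ge
      by (intro divide_left_mono) (auto simp: \<delta>_def)
    finally show ?thesis by simp
  qed
  have inv0: "1 / c0 - 1 \<ge> 0" using c0le c0pos by simp
  have core': "1 - measure_pmf.prob (Gnp n p) {E. \<exists>C1 C2. C1 \<noteq> C2 \<and> path_component n E k C1 \<and> path_component n E k C2}
     \<le> (real k * \<mu> + \<mu>^2 * (1 / c0 - 1)) / (\<mu> - real k)^2"
    unfolding c0_def \<mu>_def by (rule core[OF k1]) (use p p1 mugt in \<open>auto simp: \<mu>_def\<close>)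
  have mu0: "\<mu> > 0" using mugt kpos by simp
  have sq: "(\<mu> - real k)^2 \<ge> \<mu>^2 / 4"
  proof -
    have "\<mu> - real k \<ge> \<mu> / 2" using mu2k by simp
    then have "(\<mu> / 2)^2 \<le> (\<mu> - real k)^2" using mu0 by (intro power_mono) auto
    then show ?thesis by (simp add: power2_eq_square)
  qed
  have "(real k * \<mu> + \<mu>^2 * (1 / c0 - 1)) / (\<mu> - real k)^2
      \<le> (real k * \<mu> + \<mu>^2 * (1 / c0 - 1)) / (\<mu>^2 / 4)"
    by (rule divide_left_mono[OF sq]) (use kpos mu0 inv0 mugt in auto)
  also have "\<dots> = 4 * (real k / \<mu>) + 4 * (1 / c0 - 1)"
    using mu0 by (simp add: field_simps power2_eq_square)
  also have "\<dots> \<le> 4 * exp (- F) + 4 * (2 * \<delta>)"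
  proof -
    have "real k / \<mu> \<le> exp (- F)"
    proof -
      have "real k * exp F \<le> \<mu>" using muL LkF by simp
      then have "real k \<le> \<mu> * exp (- F)" by (simp add: exp_minus field_simps)
      then show ?thesis using mu0 by (simp add: field_simps)
    qed
    then show ?thesis using inv by simp
  qed
  finally show ?thesis using core' unfolding \<delta>_def by simp
qed



lemma a1: "filterlim (\<lambda>n::nat. ln (real n) / 2 - ln (3 * ln (real n))) at_top sequentially"
  by real_asymp

lemma a2: "(\<lambda>n::nat. (ln (real n))^2 / real n) \<longlonglongrightarrow> 0"
  by real_asymp

lemma a3: "eventually (\<lambda>n::nat. 6 * ln (real n) + 2 \<le> real n) sequentially"
  by real_asymp

lemma a4: "eventually (\<lambda>n::nat. ln (real n) / (12 * real n) \<le> 1/2) sequentially"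
  by real_asymp

theorem mainTheorem9:
  shows "\<exists>\<alpha>::real. \<alpha> > 0 \<and>
    (\<forall>(r :: nat \<Rightarrow> nat) (p :: nat \<Rightarrow> real).
       (\<forall>n. 1 \<le> r n) \<longrightarrow>
       (\<lambda>n. real (r n)) \<in> o(\<lambda>n. ln (real n)) \<longrightarrow>
       filterlim (\<lambda>n. p n * real n powr ((2 * real (r n) + 1) / (2 * real (r n)))) at_top sequentially \<longrightarrow>
       (\<forall>\<^sub>F n in sequentially. p n \<le> \<alpha> * ln (real n) / (real (r n) * real n)) \<longrightarrow>
       ((\<lambda>n. measure_pmf.prob (Gnp n (p n))
            {E. \<exists>C1 C2. C1 \<noteq> C2 \<and> path_component n E (2 * r n + 1) C1
                                   \<and> path_component n E (2 * r n + 1) C2})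
         \<longlonglongrightarrow> 1))"
proof (intro exI[of _ "1/12"] conjI allI impI)
  show "(1/12::real) > 0" by simp
  fix r :: "nat \<Rightarrow> nat" and p :: "nat \<Rightarrow> real"
  assume hr: "\<forall>n. 1 \<le> r n"
    and ho: "(\<lambda>n. real (r n)) \<in> o(\<lambda>n. ln (real n))"
    and hx: "filterlim (\<lambda>n. p n * real n powr ((2 * real (r n) + 1) / (2 * real (r n)))) at_top sequentially"
    and hp: "\<forall>\<^sub>F n in sequentially. p n \<le> 1/12 * ln (real n) / (real (r n) * real n)"
  define x where "x = (\<lambda>n. p n * real n powr ((2 * real (r n) + 1) / (2 * real (r n))))"
  define lx where "lx = (\<lambda>n. ln (p n) + ((2 * real (r n) + 1) / (2 * real (r n))) * ln (real n))"
  define F where "F = (\<lambda>n. min (lx n - 3) (ln (real n) / 2 - ln (3 * ln (real n))) - 18 * (ln (real n))^2 / real n)"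
  define G where "G = (\<lambda>n. measure_pmf.prob (Gnp n (p n))
            {E. \<exists>C1 C2. C1 \<noteq> C2 \<and> path_component n E (2 * r n + 1) C1
                                   \<and> path_component n E (2 * r n + 1) C2})"
  have hx': "filterlim x at_top sequentially" using hx unfolding x_def .
  have ev_n: "eventually (\<lambda>n. n > (0::nat)) sequentially" by (rule eventually_gt_at_top)
  have ev_x: "eventually (\<lambda>n. x n \<ge> exp 6) sequentially" using hx' unfolding filterlim_at_top by blast
  have ev_p: "eventually (\<lambda>n. p n > 0) sequentially"
    using ev_x ev_n
  proof eventually_elim
    case (elim n)
    then have "x n > 0" by (smt (verit) exp_gt_zero)
    moreover have "real n powr ((2 * real (r n) + 1) / (2 * real (r n))) > 0" using elim by simp
    ultimately show ?case unfolding x_def by (simp add: zero_less_mult_iff)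
  qed
  have ev_lx: "eventually (\<lambda>n. lx n = ln (x n)) sequentially"
    using ev_p ev_n
  proof eventually_elim
    case (elim n)
    then show ?case unfolding x_def lx_def by (simp add: ln_mult)
  qed
  have lx_lim: "filterlim lx at_top sequentially"
  proof -
    have "filterlim (\<lambda>n. ln (x n)) at_top sequentially" by (rule filterlim_compose[OF ln_at_top hx'])
    moreover have "filterlim lx at_top sequentially = filterlim (\<lambda>n. ln (x n)) at_top sequentially"
      by (rule filterlim_cong[OF refl refl ev_lx])
    ultimately show ?thesis by simp
  qed
  have ev_lx6: "eventually (\<lambda>n. lx n \<ge> 6) sequentially"
    using ev_lx ev_x ev_p ev_n
  proof eventually_elim
    case (elim n)
    then have "x n > 0" by (smt (verit) exp_gt_zero)
    then have "ln (exp 6) \<le> ln (x n)" using elim by (subst ln_le_cancel_iff) auto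
    then show ?case using elim by simp
  qed
  have ev_rl: "eventually (\<lambda>n. real (r n) \<le> ln (real n)) sequentially"
    using landau_o.smallD[OF ho, of 1, simplified] ev_n
  proof eventually_elim
    case (elim n)
    then have "ln (real n) \<ge> 0" by simp
    then show ?case using elim by simp
  qed
  have ev_pr: "eventually (\<lambda>n. 12 * p n * real (r n) * real n \<le> ln (real n)) sequentially"
    using hp ev_n
  proof eventually_elim
    case (elim n)
    have pos: "real (r n) * real n > 0" using elim hr by (simp add: Suc_le_eq)
    have "p n * (real (r n) * real n) \<le> 1/12 * ln (real n)"
      using elim(1) pos by (simp add: pos_le_divide_eq)
    then show ?case by (simp add: algebra_simps)
  qed
  have ev_ph: "eventually (\<lambda>n. p n \<le> 1/2) sequentially"
    using ev_pr ev_n a4 ev_p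
  proof eventually_elim
    case (elim n)
    have r1: "real (r n) \<ge> 1" using hr by (simp add: Suc_le_eq)
    have "12 * p n * real n \<le> 12 * p n * real (r n) * real n"
      using elim r1 by (simp add: mult.assoc mult_left_mono mult_right_mono)
    then have "12 * p n * real n \<le> ln (real n)" using elim by linarith
    then have "p n \<le> ln (real n) / (12 * real n)" using elim by (simp add: field_simps)
    then show ?case using elim by linarith
  qed
  have ev_kn: "eventually (\<lambda>n. 2 * (2 * r n + 1) \<le> n) sequentially"
    using ev_rl a3 ev_n
  proof eventually_elim
    case (elim n)
    then have "real (2 * (2 * r n + 1)) \<le> real n" by simp
    then show ?case by (simp only: of_nat_le_iff)
  qed
  have ev_dl: "eventually (\<lambda>n. (ln (real n))^2 / real n \<le> 1/2) sequentially"
    using order_tendstoD(2)[OF a2, of "1/2"] by (auto elim: eventually_mono)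
  have F_lim: "filterlim F at_top sequentially"
    unfolding filterlim_at_top
  proof
    fix Z :: real
    have e1: "eventually (\<lambda>n. Z + 4 \<le> lx n) sequentially" using lx_lim unfolding filterlim_at_top by blast
    have e2: "eventually (\<lambda>n. Z + 1 \<le> ln (real n) / 2 - ln (3 * ln (real n))) sequentially"
      using a1 unfolding filterlim_at_top by blast
    have e3: "eventually (\<lambda>n. (ln (real n))^2 / real n < 1/18) sequentially"
      using order_tendstoD(2)[OF a2, of "1/18"] by simp
    show "eventually (\<lambda>n. Z \<le> F n) sequentially"
      using e1 e2 e3
    proof eventually_elim
      case (elim n)
      then have "18 * (ln (real n))^2 / real n \<le> 1" by (simp add: mult.commute)
      then show ?case unfolding F_def using elim by linarith
    qed
  qed
  have ev_F2: "eventually (\<lambda>n. F n \<ge> ln 2) sequentially" using F_lim unfolding filterlim_at_top by blast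
  have ev_bound: "eventually (\<lambda>n. 1 - G n \<le> 4 * exp (- F n) + 8 * ((ln (real n))^2 / real n)) sequentially"
    using ev_n ev_p ev_ph ev_pr ev_rl ev_kn ev_lx6 ev_F2 ev_dl
  proof eventually_elim
    case (elim n)
    have r1: "r n \<ge> 1" using hr by simp
    show ?case unfolding G_def
      by (rule bound_n[OF r1 elim(1,2,3,4,5,6)]) (use elim in \<open>auto simp: lx_def F_def\<close>)
  qed
  have lim0: "(\<lambda>n. 4 * exp (- F n) + 8 * ((ln (real n))^2 / real n)) \<longlonglongrightarrow> 0"
  proof -
    have "filterlim (\<lambda>n. - F n) at_bot sequentially" using F_lim by (simp add: filterlim_uminus_at_top)
    then have "(\<lambda>n. exp (- F n)) \<longlonglongrightarrow> 0" by (rule filterlim_compose[OF exp_at_bot])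
    from tendsto_add[OF tendsto_mult[OF tendsto_const this] tendsto_mult[OF tendsto_const a2], of 4 8]
    show ?thesis by simp
  qed
  have G1: "\<forall>n. G n \<le> 1" unfolding G_def by simp
  have "(\<lambda>n. 1 - G n) \<longlonglongrightarrow> 0"
    by (rule tendsto_sandwich[OF _ ev_bound tendsto_const lim0]) (use G1 in \<open>auto\<close>)
  then have "(\<lambda>n. 1 - (1 - G n)) \<longlonglongrightarrow> 1 - 0" by (intro tendsto_diff tendsto_const)
  then show "G \<longlonglongrightarrow> 1" by simp
qed

end
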